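(* Let $V=\bigcup_{k\ge0}\{1,2\}^k$ be the binary tree and let $(U^v)_{v\in V}$ be i.i.d. random variables uniformly distributed on $[0,1]$. Then there exists a family $(Y^v)_{v\in V}$ of random variables with values in $D=D[0,1]$, all having the same distribution, such that for every $v\in V$, almost surely, simultaneously for all $t\in[0,1]$, $$Y^v(t)=\mathbf 1_{t<U^v}\,U^v\,Y^{v1}\!\Big(\frac{t}{U^v}\Big)+\mathbf 1_{t\ge U^v}\Big(U^vY^{v1}(1)+(1-U^v)\,Y^{v2}\Big(\frac{t-U^v}{1-U^v}\Big)\Big)+C(t,U^v).$$
   Context: $V=\bigcup_{k\ge0}\{1,2\}^k$ is the rooted binary tree of finite words over $\{1,2\}$ (root the empty word $\emptyset$, $vi$ denotes the word $v$ followed by the letter $i$). $D=D[0,1]$ is the space of càdlàg functions $[0,1]\to\mathbb R$ (right continuous with left limits), with its Borel $\sigma$-field for the Skorokhod topology. The cost functions are $C(x)=1+2x\ln x+2(1-x)\ln(1-x)$ for $x\in[0,1]$ (with $0\ln0=0$) and, for $t,x\in[0,1]$, $C(t,x)=C(x)+2\,\mathbf 1_{t<x}\big(-1+x+(1-t)\ln(1-t)-(1-x)\ln(1-x)-(x-t)\ln(x-t)\big)$. *)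

theory Defs
  imports "HOL-Probability.Probability"
begin

text \<open>Letters of the binary tree alphabet; a vertex v is a word (list of letters),
  vi is written v @ [i].\<close>
datatype letter = One | Two

definition cadlag :: "(real \<Rightarrow> real) \<Rightarrow> bool" where
  "cadlag f \<longleftrightarrow>
     (\<forall>t\<in>{0..<1}. continuous (at_right t) f) \<and>
     (\<forall>t\<in>{0<..1}. \<exists>l. (f \<longlongrightarrow> l) (at_left t)) \<and>
     (\<forall>t. t \<notin> {0..1} \<longrightarrow> f t = 0)"

definition D_set :: "(real \<Rightarrow> real) set" where
  "D_set = {f. cadlag f}"

text \<open>The space D with its Borel sigma-field for the Skorokhod topology, which is
  the trace of the cylinder (coordinate-projection) sigma-field.\<close>
definition D_meas :: "(real \<Rightarrow> real) measure" where
  "D_meas = restrict_space (Pi\<^sub>M UNIV (\<lambda>_. borel)) D_set"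

definition Cx :: "real \<Rightarrow> real" where
  "Cx x = 1 + 2 * x * ln x + 2 * (1 - x) * ln (1 - x)"

definition Ctx :: "real \<Rightarrow> real \<Rightarrow> real" where
  "Ctx t x = Cx x + 2 * (if t < x then 1 else 0) *
     (-1 + x + (1 - t) * ln (1 - t) - (1 - x) * ln (1 - x) - (x - t) * ln (x - t))"

end

theory Submission
  imports Defs "HOL-Real_Asymp.Real_Asymp"
begin

instance letter :: countable by countable_datatype

type_synonym seqs = "letter list \<Rightarrow> real"

definition sh :: "letter list \<Rightarrow> seqs \<Rightarrow> seqs" where
  "sh v x = (\<lambda>w. x (v @ w))"

definition clamp :: "real \<Rightarrow> real" where "clamp u = max 0 (min 1 u)"

definition p :: "seqs \<Rightarrow> real" where "p x = clamp (x [])"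

lemma sh_sh[simp]: "sh w (sh v x) = sh (v @ w) x"
  by (simp add: sh_def)

lemma sh_Nil[simp]: "sh [] x = x" by (simp add: sh_def)

lemma sh_app: "sh v x w = x (v @ w)" by (simp add: sh_def)

lemma p_bounds[simp]: "0 \<le> p x" "p x \<le> 1"
  by (auto simp: p_def clamp_def)

lemma p_eq: "0 \<le> x [] \<Longrightarrow> x [] \<le> 1 \<Longrightarrow> p x = x []"
  by (auto simp: p_def clamp_def)

abbreviation PS :: "seqs measure" where "PS \<equiv> Pi\<^sub>M UNIV (\<lambda>_. borel)"

lemma measurable_sh[measurable]: "sh v \<in> measurable PS PS"
  unfolding sh_def by (rule measurable_PiM_single') (auto simp: space_PiM)

lemma measurable_p[measurable]: "p \<in> borel_measurable PS"
  unfolding p_def clamp_def by measurable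

lemma g_bounds:
  fixes y :: real assumes "0 \<le> y" "y \<le> 1"
  shows "-1 \<le> y * ln y" "y * ln y \<le> 0"
proof -
  show "y * ln y \<le> 0"
    using assms by (cases "y = 0") (auto simp: mult_nonneg_nonpos)
  show "-1 \<le> y * ln y"
  proof (cases "y = 0")
    case False
    then have y: "0 < y" using assms by simp
    have "ln (1/y) \<le> 1/y - 1" using y by (intro ln_le_minus_one) auto
    then have "- ln y \<le> 1/y - 1" using y by (simp add: ln_div)
    then have "y * (- ln y) \<le> y * (1/y - 1)" using y by (intro mult_left_mono) auto
    also have "\<dots> = 1 - y" using y by (simp add: field_simps)
    finally show ?thesis using assms by simp
  qed simp
qed

lemma Cx_bound: "0 \<le> u \<Longrightarrow> u \<le> 1 \<Longrightarrow> \<bar>Cx u\<bar> \<le> 3"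
proof -
  assume "0 \<le> u" "u \<le> 1"
  then have "-1 \<le> u * ln u" "u * ln u \<le> 0" "-1 \<le> (1-u) * ln (1-u)" "(1-u) * ln (1-u) \<le> 0"
    using g_bounds[of u] g_bounds[of "1-u"] by auto
  moreover have "Cx u = 1 + 2 * (u * ln u) + 2 * ((1-u) * ln (1-u))" by (simp add: Cx_def)
  ultimately show ?thesis by (simp add: abs_le_iff)
qed

definition Cb :: real where "Cb = 8"

lemma Ctx_bound:
  assumes "0 \<le> t" "t \<le> 1" "0 \<le> u" "u \<le> 1"
  shows "\<bar>Ctx t u\<bar> \<le> Cb"
proof -
  have "\<bar>Cx u\<bar> \<le> 3" using assms Cx_bound by auto
  moreover have "t < u \<Longrightarrow> \<bar>-1 + u + (1 - t) * ln (1 - t) - (1 - u) * ln (1 - u) - (u - t) * ln (u - t)\<bar> \<le> 2"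
    using g_bounds[of "1-t"] g_bounds[of "1-u"] g_bounds[of "u-t"] assms by (auto simp: abs_le_iff)
  ultimately show ?thesis unfolding Ctx_def Cb_def by (auto simp: abs_le_iff)
qed

lemma measurable_Cx[measurable]: "Cx \<in> borel_measurable borel"
  unfolding Cx_def by measurable

lemma measurable_Ctx[measurable]: "(\<lambda>(t, u). Ctx t u) \<in> borel_measurable (borel \<Otimes>\<^sub>M borel)"
  unfolding Ctx_def by measurable

primrec S :: "nat \<Rightarrow> seqs \<Rightarrow> real" where
  "S 0 x = Cx (p x)"
| "S (Suc j) x = p x * S j (sh [One] x) + (1 - p x) * S j (sh [Two] x)"

lemma S_bound: "\<bar>S j x\<bar> \<le> 3"
proof (induction j arbitrary: x)
  case 0 then show ?case using Cx_bound[of "p x"] by simp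
next
  case (Suc j)
  have "\<bar>S (Suc j) x\<bar> \<le> \<bar>p x * S j (sh [One] x)\<bar> + \<bar>(1 - p x) * S j (sh [Two] x)\<bar>"
    by (simp add: abs_triangle_ineq)
  also have "\<dots> = p x * \<bar>S j (sh [One] x)\<bar> + (1 - p x) * \<bar>S j (sh [Two] x)\<bar>"
    by (simp add: abs_mult)
  also have "\<dots> \<le> p x * 3 + (1 - p x) * 3"
    by (intro add_mono mult_left_mono Suc) auto
  finally show ?case by simp
qed

lemma measurable_S[measurable]: "S j \<in> borel_measurable PS"
  by (induction j) auto

definition Q :: "seqs \<Rightarrow> real" where "Q x = (\<Sum>j. S j x)"

lemma measurable_Q[measurable]: "Q \<in> borel_measurable PS"
  unfolding Q_def by measurable

definition Bn :: "seqs \<Rightarrow> ennreal" where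
  "Bn x = (\<Sum>j. ennreal ((6/5)^j * (S j x)^2))"

lemma measurable_Bn[measurable]: "Bn \<in> borel_measurable PS"
  unfolding Bn_def by measurable

lemma amgm: fixes A c e :: real assumes "0 < c" "0 < e"
  shows "2 * A \<le> A^2 * c / e + e / c"
proof -
  have "A^2 * c / e + e / c - 2 * A = (A * c - e)^2 / (c * e)"
    using assms by (simp add: field_simps power2_eq_square)
  moreover have "0 \<le> (A * c - e)^2 / (c * e)" using assms by simp
  ultimately show ?thesis by linarith
qed

lemma Q_facts:
  assumes B: "Bn x < \<infinity>"
  shows "summable (\<lambda>j. S j x)" "summable (\<lambda>j. \<bar>S j x\<bar>)"
    "\<And>l e. 0 \<le> l \<Longrightarrow> 0 < e \<Longrightarrow> ennreal (2 * l * \<bar>Q x\<bar>) \<le> ennreal (l^2 / e) * Bn x + ennreal (6 * e)"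
proof -
  define b where "b j = (6/5)^j * (S j x)^2" for j
  have b0: "0 \<le> b j" for j by (simp add: b_def)
  have sb: "summable b"
    using B by (intro summable_suminf_not_top) (auto simp: b0 Bn_def b_def)
  have Bn_eq: "Bn x = ennreal (suminf b)"
    unfolding Bn_def b_def[symmetric] by (rule suminf_ennreal2[OF b0 sb])
  have geo: "summable (\<lambda>j. (5/6::real)^j)" "(\<Sum>j. (5/6::real)^j) = 6"
    by (auto simp: summable_geometric suminf_geometric)
  have key: "2 * l * \<bar>S j x\<bar> \<le> l^2 / e * b j + e * (5/6)^j" if "0 \<le> l" "0 < e" for l e j
  proof -
    have "2 * (l * \<bar>S j x\<bar>) \<le> (l * \<bar>S j x\<bar>)^2 * (6/5)^j / e + e / (6/5)^j"
      using that by (intro amgm) auto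
    also have "\<dots> = l^2 / e * b j + e * (5/6)^j"
      by (simp add: b_def power_mult_distrib field_simps power_divide)
    finally show ?thesis by simp
  qed
  have sabs: "summable (\<lambda>j. \<bar>S j x\<bar>)"
  proof (rule summable_comparison_test[where g = "\<lambda>j. (b j + (5/6)^j) / 2"])
    show "\<exists>N. \<forall>n\<ge>N. norm \<bar>S n x\<bar> \<le> (b n + (5/6)^n) / 2"
      by (rule exI[of _ 0]) (use key[of 1 1] in \<open>auto simp: mult.commute\<close>)
    show "summable (\<lambda>j. (b j + (5/6)^j) / 2)"
      by (intro summable_divide summable_add sb geo)
  qed
  then show "summable (\<lambda>j. \<bar>S j x\<bar>)" .
  then show "summable (\<lambda>j. S j x)" by (rule summable_rabs_cancel)
  fix l e :: real assume le: "0 \<le> l" "0 < e"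
  have "2 * l * \<bar>Q x\<bar> \<le> 2 * l * (\<Sum>j. \<bar>S j x\<bar>)"
    unfolding Q_def using le sabs by (intro mult_left_mono summable_rabs) auto
  also have "\<dots> = (\<Sum>j. 2 * l * \<bar>S j x\<bar>)"
    using sabs by (intro suminf_mult[symmetric])
  also have "\<dots> \<le> (\<Sum>j. l^2 / e * b j + e * (5/6)^j)"
    using key[OF le] sabs sb geo
    by (intro suminf_le summable_add summable_mult) auto
  also have "\<dots> = l^2 / e * suminf b + 6 * e"
  proof -
    have "(\<Sum>j. l^2 / e * b j + e * (5/6)^j) = (\<Sum>j. l^2 / e * b j) + (\<Sum>j. e * (5/6)^j)"
      using sb geo by (intro suminf_add[symmetric] summable_mult)
    also have "\<dots> = l^2 / e * suminf b + e * 6"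
      using suminf_mult[OF sb, of "l^2/e"] suminf_mult[OF geo(1), of e] geo(2) by simp
    finally show ?thesis by simp
  qed
  finally have "2 * l * \<bar>Q x\<bar> \<le> l^2 * suminf b / e + 6 * e" by simp
  then show "ennreal (2 * l * \<bar>Q x\<bar>) \<le> ennreal (l^2 / e) * Bn x + ennreal (6 * e)"
  proof -
    have s0: "0 \<le> suminf b" by (intro suminf_nonneg sb b0)
    have "ennreal (l^2 / e) * ennreal (suminf b) + ennreal (6 * e) = ennreal (l^2 / e * suminf b + 6 * e)"
    proof -
      have "ennreal (l^2 / e) * ennreal (suminf b) = ennreal (l^2 / e * suminf b)"
        by (rule ennreal_mult[symmetric]) (use le s0 in auto)
      moreover have "ennreal (l^2 / e * suminf b) + ennreal (6 * e) = ennreal (l^2 / e * suminf b + 6 * e)"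
        by (rule ennreal_plus[symmetric]) (use le s0 in auto)
      ultimately show ?thesis by simp
    qed
    moreover have "l^2 / e * suminf b = l^2 * suminf b / e" by simp
    ultimately show ?thesis unfolding Bn_eq using \<open>2 * l * \<bar>Q x\<bar> \<le> l^2 * suminf b / e + 6 * e\<close>
      by (simp add: ennreal_leI)
  qed
qed

primrec Rn :: "nat \<Rightarrow> (seqs \<Rightarrow> ennreal) \<Rightarrow> seqs \<Rightarrow> ennreal" where
  "Rn 0 h x = h x"
| "Rn (Suc k) h x = ennreal ((p x)^2) * Rn k h (sh [One] x) + ennreal ((1 - p x)^2) * Rn k h (sh [Two] x)"

definition hp :: "seqs \<Rightarrow> ennreal" where "hp x = ennreal Cb + Bn (sh [One] x)"

definition Phi :: "seqs \<Rightarrow> ennreal" where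
  "Phi x = (\<Sum>k. ennreal ((6/5)^k) * Rn k hp x)"

definition KK :: real where "KK = Cb + 6"

lemma measurable_Rn: assumes [measurable]: "h \<in> borel_measurable PS"
  shows "(\<lambda>x. Rn k h x) \<in> borel_measurable PS"
proof (induction k)
  case 0 then show ?case by simp
next
  case (Suc k)
  note [measurable] = Suc.IH
  show ?case by simp measurable
qed

lemma measurable_hp[measurable]: "hp \<in> borel_measurable PS"
  unfolding hp_def by measurable

lemmas measurable_Rn_hp[measurable] = measurable_Rn[OF measurable_hp]

lemma measurable_Phi[measurable]: "Phi \<in> borel_measurable PS"
  unfolding Phi_def by measurable

primrec T :: "nat \<Rightarrow> seqs \<Rightarrow> real \<Rightarrow> real" where
  "T 0 x t = Ctx t (p x) + (if p x \<le> t then p x * Q (sh [One] x) else 0)"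
| "T (Suc k) x t = (if t < p x then p x * T k (sh [One] x) (t / p x)
     else (1 - p x) * T k (sh [Two] x) ((t - p x) / (1 - p x)))"

lemma T_bound:
  assumes "\<forall>w. Bn (sh w x) < \<infinity>" "0 \<le> t" "t < 1" "0 \<le> l" "0 < e"
  shows "ennreal (2 * l * \<bar>T k x t\<bar>) \<le> ennreal (l^2 / e) * Rn k hp x + ennreal (e * KK)"
  using assms
proof (induction k arbitrary: x t l)
  case 0
  have Bx: "Bn (sh [One] x) < \<infinity>" using 0 by auto
  have "\<bar>T 0 x t\<bar> \<le> \<bar>Ctx t (p x)\<bar> + \<bar>(if p x \<le> t then p x * Q (sh [One] x) else 0)\<bar>"
    by (simp add: abs_triangle_ineq)
  also have "\<dots> \<le> Cb + \<bar>Q (sh [One] x)\<bar>"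
  proof (intro add_mono)
    show "\<bar>Ctx t (p x)\<bar> \<le> Cb" using 0 by (intro Ctx_bound) auto
    have "p x * \<bar>Q (sh [One] x)\<bar> \<le> 1 * \<bar>Q (sh [One] x)\<bar>" by (intro mult_right_mono) auto
    then show "\<bar>(if p x \<le> t then p x * Q (sh [One] x) else 0)\<bar> \<le> \<bar>Q (sh [One] x)\<bar>"
      by (auto simp: abs_mult)
  qed
  finally have c: "\<bar>T 0 x t\<bar> \<le> Cb + \<bar>Q (sh [One] x)\<bar>" .
  have "2 * l * \<bar>T 0 x t\<bar> \<le> 2 * l * (Cb + \<bar>Q (sh [One] x)\<bar>)"
    using c 0 by (intro mult_left_mono) auto
  then have "2 * l * \<bar>T 0 x t\<bar> \<le> 2 * l * Cb + 2 * l * \<bar>Q (sh [One] x)\<bar>"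
    by (metis distrib_left)
  then have "ennreal (2 * l * \<bar>T 0 x t\<bar>) \<le> ennreal (2 * l * Cb + 2 * l * \<bar>Q (sh [One] x)\<bar>)"
    by (rule ennreal_leI)
  also have "\<dots> = ennreal (2 * l * Cb) + ennreal (2 * l * \<bar>Q (sh [One] x)\<bar>)"
    using 0 by (intro ennreal_plus) (auto simp: Cb_def)
  also have "\<dots> \<le> ennreal (l^2 / e * Cb + e * Cb) + (ennreal (l^2 / e) * Bn (sh [One] x) + ennreal (6 * e))"
  proof (intro add_mono)
    have "2 * l \<le> l^2 * 1 / e + e / 1" using 0 by (intro amgm) auto
    then have "2 * l * Cb \<le> (l^2 / e + e) * Cb" by (intro mult_right_mono) (auto simp: Cb_def)
    then show "ennreal (2 * l * Cb) \<le> ennreal (l^2 / e * Cb + e * Cb)"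
      by (intro ennreal_leI) (simp add: algebra_simps)
    show "ennreal (2 * l * \<bar>Q (sh [One] x)\<bar>) \<le> ennreal (l^2 / e) * Bn (sh [One] x) + ennreal (6 * e)"
      using Q_facts(3)[OF Bx] 0 by auto
  qed
  also have "\<dots> = ennreal (l^2 / e) * (ennreal Cb + Bn (sh [One] x)) + ennreal (e * KK)"
  proof -
    have a: "ennreal (l^2 / e * Cb + e * Cb) = ennreal (l^2 / e) * ennreal Cb + ennreal (e * Cb)"
    proof -
      have "ennreal (l^2/e*Cb + e*Cb) = ennreal (l^2/e*Cb) + ennreal (e*Cb)"
        using 0 by (intro ennreal_plus) (auto simp: Cb_def)
      moreover have "ennreal (l^2/e*Cb) = ennreal (l^2/e) * ennreal Cb"
        using 0 by (intro ennreal_mult) (auto simp: Cb_def)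
      ultimately show ?thesis by metis
    qed
    have b: "ennreal (e * KK) = ennreal (e * Cb) + ennreal (6 * e)"
      using 0 by (simp add: KK_def ennreal_plus[symmetric] Cb_def algebra_simps)
    show ?thesis unfolding a b by (simp add: algebra_simps)
  qed
  finally show ?case by (simp add: hp_def)
next
  case (Suc k)
  define u where "u = p x"
  have u: "0 \<le> u" "u \<le> 1" by (auto simp: u_def)
  have IH1: "ennreal (2 * l' * \<bar>T k (sh [One] x) t'\<bar>) \<le> ennreal (l'^2 / e) * Rn k hp (sh [One] x) + ennreal (e * KK)"
    if "0 \<le> t'" "t' < 1" "0 \<le> l'" for t' l'
    using Suc.prems that by (intro Suc.IH) auto
  have IH2: "ennreal (2 * l' * \<bar>T k (sh [Two] x) t'\<bar>) \<le> ennreal (l'^2 / e) * Rn k hp (sh [Two] x) + ennreal (e * KK)"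
    if "0 \<le> t'" "t' < 1" "0 \<le> l'" for t' l'
    using Suc.prems that by (intro Suc.IH) auto
  show ?case
  proof (cases "t < u")
    case True
    then have u0: "0 < u" using Suc.prems by auto
    have "ennreal (2 * l * \<bar>T (Suc k) x t\<bar>) = ennreal (2 * (l * u) * \<bar>T k (sh [One] x) (t / u)\<bar>)"
      using True u by (simp add: u_def[symmetric] abs_mult algebra_simps)
    also have "\<dots> \<le> ennreal ((l * u)^2 / e) * Rn k hp (sh [One] x) + ennreal (e * KK)"
      using True u0 Suc.prems by (intro IH1) auto
    also have "ennreal ((l * u)^2 / e) = ennreal (l^2 / e) * ennreal (u^2)"
      using Suc.prems by (simp add: ennreal_mult[symmetric] power_mult_distrib)
    also have "ennreal (l^2 / e) * ennreal (u^2) * Rn k hp (sh [One] x) \<le> ennreal (l^2 / e) * Rn (Suc k) hp x"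
      by (simp add: u_def mult.assoc mult_left_mono)
    finally show ?thesis by (simp add: add_right_mono)
  next
    case False
    then have u1: "u < 1" using Suc.prems by auto
    have "T (Suc k) x t = (1 - u) * T k (sh [Two] x) ((t - u) / (1 - u))"
      using False by (simp add: u_def)
    then have "\<bar>T (Suc k) x t\<bar> = (1 - u) * \<bar>T k (sh [Two] x) ((t - u) / (1 - u))\<bar>"
      using u1 by (simp add: abs_mult)
    then have "ennreal (2 * l * \<bar>T (Suc k) x t\<bar>) = ennreal (2 * (l * (1 - u)) * \<bar>T k (sh [Two] x) ((t - u) / (1 - u))\<bar>)"
      by (simp only: mult.assoc)
    also have "\<dots> \<le> ennreal ((l * (1 - u))^2 / e) * Rn k hp (sh [Two] x) + ennreal (e * KK)"
      using False u u1 Suc.prems by (intro IH2) (auto simp: field_simps mult_left_le)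
    also have "ennreal ((l * (1 - u))^2 / e) = ennreal (l^2 / e) * ennreal ((1 - u)^2)"
      using Suc.prems u1 by (simp add: ennreal_mult[symmetric] power_mult_distrib)
    also have "ennreal (l^2 / e) * ennreal ((1 - u)^2) * Rn k hp (sh [Two] x) \<le> ennreal (l^2 / e) * Rn (Suc k) hp x"
      by (simp add: u_def mult.assoc mult_left_mono)
    finally show ?thesis by (simp add: add_right_mono)
  qed
qed

definition Mb :: "nat \<Rightarrow> seqs \<Rightarrow> real" where
  "Mb k x = ((6/5)^k * enn2real (Rn k hp x) + (5/6)^k * KK) / 2"

lemma Phi_term_fin: assumes "Phi x < \<infinity>" shows "Rn k hp x < \<infinity>"
proof -
  have "ennreal ((6/5)^k) * Rn k hp x < \<infinity>"
    using ennreal_suminf_lessD[of "\<lambda>k. ennreal ((6/5)^k) * Rn k hp x"] assms by (auto simp: Phi_def)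
  then show ?thesis by (auto simp: ennreal_mult_less_top)
qed

lemma T_Mb:
  assumes "\<forall>w. Bn (sh w x) < \<infinity>" "Rn k hp x < \<infinity>" "0 \<le> t" "t < 1"
  shows "\<bar>T k x t\<bar> \<le> Mb k x"
proof -
  have "ennreal (2 * 1 * \<bar>T k x t\<bar>) \<le> ennreal (1^2 / (5/6)^k) * Rn k hp x + ennreal ((5/6)^k * KK)"
    using assms by (intro T_bound) auto
  also have "Rn k hp x = ennreal (enn2real (Rn k hp x))" using assms(2) by simp
  also have "ennreal (1^2 / (5/6)^k) * ennreal (enn2real (Rn k hp x)) + ennreal ((5/6)^k * KK)
      = ennreal ((6/5)^k * enn2real (Rn k hp x) + (5/6)^k * KK)"
    by (simp add: ennreal_mult[symmetric] ennreal_plus[symmetric] KK_def Cb_def power_one_over[symmetric]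
        del: ennreal_plus)
  finally have "2 * \<bar>T k x t\<bar> \<le> (6/5)^k * enn2real (Rn k hp x) + (5/6)^k * KK"
    by (subst (asm) ennreal_le_iff) (auto simp: KK_def Cb_def)
  then show ?thesis by (simp add: Mb_def)
qed

lemma Mb_summable: assumes "Phi x < \<infinity>" shows "summable (\<lambda>k. Mb k x)"
proof -
  have r0: "0 \<le> (6/5::real)^k * enn2real (Rn k hp x)" for k by simp
  have "(\<Sum>k. ennreal ((6/5)^k * enn2real (Rn k hp x))) = Phi x"
    unfolding Phi_def using Phi_term_fin[OF assms]
    by (intro suminf_cong) (simp add: ennreal_mult)
  then have s1: "summable (\<lambda>k. (6/5::real)^k * enn2real (Rn k hp x))"
    using assms by (intro summable_suminf_not_top r0) auto
  have s2: "summable (\<lambda>k. (5/6::real)^k * KK)"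
    by (intro summable_mult2 summable_geometric) auto
  show ?thesis unfolding Mb_def
    by (intro summable_divide summable_add s1 s2)
qed

definition good :: "seqs \<Rightarrow> bool" where
  "good x \<longleftrightarrow> (\<forall>w. 0 < x w \<and> x w < 1 \<and> Bn (sh w x) < \<infinity> \<and> Phi (sh w x) < \<infinity>)"

lemma good_sh: "good x \<Longrightarrow> good (sh v x)"
  unfolding good_def by (auto simp: sh_app)

lemma good_p: "good x \<Longrightarrow> p x = x []"
  unfolding good_def by (intro p_eq) (auto dest: spec[of _ "[]"])

lemma good_u: "good x \<Longrightarrow> 0 < x [] \<and> x [] < 1"
  unfolding good_def by auto

lemma good_Bn: "good x \<Longrightarrow> Bn (sh w x) < \<infinity>"
  unfolding good_def by auto

lemma good_Phi: "good x \<Longrightarrow> Phi x < \<infinity>"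
  unfolding good_def by (auto dest: spec[of _ "[]"])

lemma good_T_Mb: "good x \<Longrightarrow> 0 \<le> t \<Longrightarrow> t < 1 \<Longrightarrow> \<bar>T k x t\<bar> \<le> Mb k x"
  by (rule T_Mb) (use good_Bn[of x] Phi_term_fin[OF good_Phi[of x]] in auto)

lemma good_T_summable: "good x \<Longrightarrow> 0 \<le> t \<Longrightarrow> t < 1 \<Longrightarrow> summable (\<lambda>k. T k x t)"
  by (rule summable_comparison_test[OF _ Mb_summable[OF good_Phi]])
     (auto intro!: exI[of _ 0] good_T_Mb)

definition Yf :: "seqs \<Rightarrow> real \<Rightarrow> real" where
  "Yf x t = (if 0 \<le> t \<and> t < 1 then (\<Sum>k. T k x t) else if t = 1 then Q x else 0)"

lemma good_Q_eq:
  assumes "good x"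
  shows "Q x = x [] * Q (sh [One] x) + (1 - x []) * Q (sh [Two] x) + Cx (x [])"
proof -
  have s: "summable (\<lambda>j. S j y)" if "good y" for y
    using Q_facts(1)[OF good_Bn[OF that, of "[]"]] by simp
  have g1: "good (sh [One] x)" and g2: "good (sh [Two] x)" using good_sh assms by auto
  have "Q x = (\<Sum>j. S (Suc j) x) + S 0 x"
    unfolding Q_def using suminf_split_head[OF s[OF assms]] by simp
  also have "(\<Sum>j. S (Suc j) x) = (\<Sum>j. x [] * S j (sh [One] x)) + (\<Sum>j. (1 - x []) * S j (sh [Two] x))"
    using s[OF g1] s[OF g2] good_p[OF assms]
    by (simp add: suminf_add[symmetric] summable_mult)
  also have "\<dots> = x [] * Q (sh [One] x) + (1 - x []) * Q (sh [Two] x)"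
    using s[OF g1] s[OF g2] by (simp add: suminf_mult Q_def)
  finally show ?thesis using good_p[OF assms] by simp
qed

lemma Yf_eq:
  assumes g: "good x" and t: "0 \<le> t" "t \<le> 1"
  shows "Yf x t = (if t < x [] then x [] * Yf (sh [One] x) (t / x [])
           else x [] * Yf (sh [One] x) 1
                + (1 - x []) * Yf (sh [Two] x) ((t - x []) / (1 - x [])))
          + Ctx t (x [])"
proof -
  define u where "u = x []"
  have u: "0 < u" "u < 1" using good_u[OF g] by (auto simp: u_def)
  have pu: "p x = u" using good_p[OF g] by (simp add: u_def)
  have g1: "good (sh [One] x)" and g2: "good (sh [Two] x)" using good_sh g by auto
  have Y1: "Yf (sh [One] x) 1 = Q (sh [One] x)" by (simp add: Yf_def)
  show ?thesis
  proof (cases "t = 1")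
    case True
    have C1: "Ctx 1 u = Cx u" using u by (simp add: Ctx_def)
    show ?thesis using True u good_Q_eq[OF g] C1
      by (simp add: Yf_def u_def[symmetric])
  next
    case False
    then have t1: "t < 1" using t by simp
    have sT: "summable (\<lambda>k. T k x t)" using good_T_summable[OF g t(1) t1] .
    have "Yf x t = (\<Sum>k. T (Suc k) x t) + T 0 x t"
      unfolding Yf_def using t t1 suminf_split_head[OF sT] by simp
    also have "\<dots> = (if t < u then u * Yf (sh [One] x) (t / u)
           else u * Yf (sh [One] x) 1 + (1 - u) * Yf (sh [Two] x) ((t - u) / (1 - u))) + Ctx t u"
    proof (cases "t < u")
      case True
      have a: "0 \<le> t / u" "t / u < 1" using True t u by (auto simp: field_simps)
      have "(\<Sum>k. T (Suc k) x t) = (\<Sum>k. u * T k (sh [One] x) (t / u))"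
        using True by (simp add: pu)
      also have "\<dots> = u * Yf (sh [One] x) (t / u)"
        using good_T_summable[OF g1 a] a by (simp add: suminf_mult Yf_def)
      finally show ?thesis using True by (simp add: pu)
    next
      case False
      have a: "0 \<le> (t - u) / (1 - u)" "(t - u) / (1 - u) < 1" using False t1 u by (auto simp: field_simps)
      have "(\<Sum>k. T (Suc k) x t) = (\<Sum>k. (1 - u) * T k (sh [Two] x) ((t - u) / (1 - u)))"
        using False by (simp add: pu)
      also have "\<dots> = (1 - u) * Yf (sh [Two] x) ((t - u) / (1 - u))"
        using good_T_summable[OF g2 a] a by (simp add: suminf_mult Yf_def)
      finally show ?thesis using False by (simp add: pu Y1)
    qed
    finally show ?thesis by (simp add: u_def)
  qed
qed

lemma g_cont: "continuous_on {0..} (\<lambda>y::real. y * ln y)"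
proof (rule continuous_on_eq_continuous_within[THEN iffD2], intro ballI)
  fix y :: real assume y: "y \<in> {0..}"
  show "continuous (at y within {0..}) (\<lambda>y. y * ln y)"
  proof (cases "y = 0")
    case True
    have "((\<lambda>y::real. y * ln y) \<longlongrightarrow> 0) (at_right 0)" by real_asymp
    then show ?thesis using True by (simp add: continuous_within at_within_Ici_at_right)
  next
    case False
    then have "y > 0" using y by simp
    then have "isCont (\<lambda>y. y * ln y) y" by (intro continuous_intros) auto
    then show ?thesis by (rule continuous_at_imp_continuous_at_within)
  qed
qed

definition Ef :: "real \<Rightarrow> real \<Rightarrow> real" where
  "Ef u s = Cx u + 2 * (-1 + u + (1 - s) * ln (1 - s) - (1 - u) * ln (1 - u) - (u - s) * ln (u - s))"

lemma Ctx_Ef: "Ctx s u = (if s < u then Ef u s else Cx u)"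
  by (simp add: Ctx_def Ef_def)

lemma Ef_cont: assumes "u \<le> 1" shows "continuous_on {..u} (Ef u)"
proof -
  have c1: "continuous_on {..u} (\<lambda>s. (1 - s) * ln (1 - s))"
    by (rule continuous_on_compose2[OF g_cont]) (use assms in \<open>auto intro!: continuous_intros\<close>)
  have c2: "continuous_on {..u} (\<lambda>s. (u - s) * ln (u - s))"
    by (rule continuous_on_compose2[OF g_cont]) (auto intro!: continuous_intros)
  show ?thesis unfolding Ef_def by (intro continuous_intros c1 c2)
qed

lemma Ef_isCont: assumes "s < u" "u \<le> 1" shows "isCont (Ef u) s"
  unfolding Ef_def using assms by (intro continuous_intros) auto

lemma ev_left_less: "eventually (\<lambda>y. y < t) (at_left (t::real))"
  by (auto simp: eventually_at_filter)

lemma ev_right_greater: "eventually (\<lambda>y. t < y) (at_right (t::real))"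
  by (rule eventually_at_right_less)

lemma filterlim_div_right:
  assumes "0 < c" shows "filterlim (\<lambda>s::real. (s - b) / c) (at_right ((t - b) / c)) (at_right t)"
proof (rule tendsto_imp_filterlim_at_right)
  show "((\<lambda>s. (s - b) / c) \<longlongrightarrow> (t - b) / c) (at_right t)"
    by (intro tendsto_intros) (use assms in auto)
  show "\<forall>\<^sub>F s in at_right t. (t - b) / c < (s - b) / c"
    using ev_right_greater[of t] by eventually_elim (use assms in \<open>auto simp: divide_strict_right_mono\<close>)
qed

lemma filterlim_div_left:
  assumes "0 < c" shows "filterlim (\<lambda>s::real. (s - b) / c) (at_left ((t - b) / c)) (at_left t)"
proof (rule tendsto_imp_filterlim_at_left)
  show "((\<lambda>s. (s - b) / c) \<longlongrightarrow> (t - b) / c) (at_left t)"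
    by (intro tendsto_intros) (use assms in auto)
  show "\<forall>\<^sub>F s in at_left t. (s - b) / c < (t - b) / c"
    using ev_left_less[of t] by eventually_elim (use assms in \<open>auto simp: divide_strict_right_mono\<close>)
qed

lemma T_RC: "0 \<le> t \<Longrightarrow> t < 1 \<Longrightarrow> (T k x \<longlongrightarrow> T k x t) (at_right t)"
proof (induction k arbitrary: x t)
  case 0
  define u where "u = p x"
  have u: "0 \<le> u" "u \<le> 1" by (auto simp: u_def)
  show ?case
  proof (cases "t < u")
    case True
    have ev: "eventually (\<lambda>s. s < u) (at_right t)"
      using True by (intro order_tendstoD(2)[OF tendsto_ident_at]) 
    have "eventually (\<lambda>s. T 0 x s = Ef u s) (at_right t)"
      using ev by eventually_elim (auto simp: u_def[symmetric] Ctx_Ef)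
    moreover have "(Ef u \<longlongrightarrow> Ef u t) (at_right t)"
      using Ef_isCont[OF True u(2)] by (simp add: isCont_def filterlim_at_split)
    moreover have "T 0 x t = Ef u t" using True by (simp add: u_def[symmetric] Ctx_Ef)
    ultimately show ?thesis by (simp add: tendsto_cong)
  next
    case False
    have "eventually (\<lambda>s. T 0 x s = T 0 x t) (at_right t)"
      using ev_right_greater[of t] by eventually_elim (use False in \<open>auto simp: u_def[symmetric] Ctx_Ef\<close>)
    then show ?thesis by (simp add: tendsto_cong)
  qed
next
  case (Suc k)
  define u where "u = p x"
  have u: "0 \<le> u" "u \<le> 1" by (auto simp: u_def)
  show ?case
  proof (cases "t < u")
    case True
    then have u0: "0 < u" using Suc.prems by auto
    have ev: "eventually (\<lambda>s. s < u) (at_right t)"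
      using True by (intro order_tendstoD(2)[OF tendsto_ident_at])
    have "eventually (\<lambda>s. T (Suc k) x s = u * T k (sh [One] x) ((s - 0) / u)) (at_right t)"
      using ev by eventually_elim (auto simp: u_def[symmetric])
    moreover have "((\<lambda>s. u * T k (sh [One] x) ((s - 0) / u)) \<longlongrightarrow> u * T k (sh [One] x) ((t - 0) / u)) (at_right t)"
      by (intro tendsto_mult tendsto_const filterlim_compose[OF Suc.IH filterlim_div_right])
         (use True u0 Suc.prems in auto)
    moreover have "T (Suc k) x t = u * T k (sh [One] x) ((t - 0) / u)" using True by (simp add: u_def[symmetric])
    ultimately show ?thesis by (simp add: tendsto_cong)
  next
    case False
    then have u1: "u < 1" using Suc.prems by auto
    have "eventually (\<lambda>s. T (Suc k) x s = (1 - u) * T k (sh [Two] x) ((s - u) / (1 - u))) (at_right t)"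
      using ev_right_greater[of t] by eventually_elim (use False in \<open>auto simp: u_def[symmetric]\<close>)
    moreover have "((\<lambda>s. (1 - u) * T k (sh [Two] x) ((s - u) / (1 - u))) \<longlongrightarrow> (1 - u) * T k (sh [Two] x) ((t - u) / (1 - u))) (at_right t)"
      by (intro tendsto_mult tendsto_const filterlim_compose[OF Suc.IH filterlim_div_right])
         (use False u1 Suc.prems in \<open>auto simp: field_simps\<close>)
    moreover have "T (Suc k) x t = (1 - u) * T k (sh [Two] x) ((t - u) / (1 - u))" using False by (simp add: u_def[symmetric])
    ultimately show ?thesis by (simp add: tendsto_cong)
  qed
qed

lemma T_LL: "0 < t \<Longrightarrow> t \<le> 1 \<Longrightarrow> \<exists>l. (T k x \<longlongrightarrow> l) (at_left t)"
proof (induction k arbitrary: x t)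
  case 0
  define u where "u = p x"
  have u: "0 \<le> u" "u \<le> 1" by (auto simp: u_def)
  show ?case
  proof (cases "t \<le> u")
    case True
    have "eventually (\<lambda>s. T 0 x s = Ef u s) (at_left t)"
      using ev_left_less[of t] by eventually_elim (use True in \<open>auto simp: u_def[symmetric] Ctx_Ef\<close>)
    moreover have "(Ef u \<longlongrightarrow> Ef u t) (at_left t)"
    proof -
      have "(Ef u \<longlongrightarrow> Ef u t) (at t within {..u})"
        using Ef_cont[OF u(2)] True by (simp add: continuous_on_def)
      then show ?thesis by (rule tendsto_within_subset) (use True in auto)
    qed
    ultimately show ?thesis by (auto simp: tendsto_cong)
  next
    case False
    have ev: "eventually (\<lambda>s. u < s) (at_left t)"
      using False by (intro order_tendstoD(1)[OF tendsto_ident_at]) auto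
    have "eventually (\<lambda>s. T 0 x s = Cx u + u * Q (sh [One] x)) (at_left t)"
      using ev by eventually_elim (auto simp: u_def[symmetric] Ctx_Ef)
    then show ?thesis by (auto simp: tendsto_cong)
  qed
next
  case (Suc k)
  define u where "u = p x"
  have u: "0 \<le> u" "u \<le> 1" by (auto simp: u_def)
  show ?case
  proof (cases "t \<le> u")
    case True
    then have u0: "0 < u" using Suc.prems by auto
    obtain l where l: "(T k (sh [One] x) \<longlongrightarrow> l) (at_left ((t - 0) / u))"
      using Suc.IH[of "(t - 0) / u" "sh [One] x"] True u0 Suc.prems by auto
    have "eventually (\<lambda>s. T (Suc k) x s = u * T k (sh [One] x) ((s - 0) / u)) (at_left t)"
      using ev_left_less[of t] by eventually_elim (use True in \<open>auto simp: u_def[symmetric]\<close>)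
    moreover have "((\<lambda>s. u * T k (sh [One] x) ((s - 0) / u)) \<longlongrightarrow> u * l) (at_left t)"
      by (intro tendsto_mult tendsto_const filterlim_compose[OF l filterlim_div_left] u0)
    ultimately show ?thesis by (auto simp: tendsto_cong)
  next
    case False
    then have u1: "u < 1" using Suc.prems by auto
    obtain l where l: "(T k (sh [Two] x) \<longlongrightarrow> l) (at_left ((t - u) / (1 - u)))"
      using Suc.IH[of "(t - u) / (1 - u)" "sh [Two] x"] False u1 Suc.prems by (auto simp: field_simps)
    have ev: "eventually (\<lambda>s. u < s) (at_left t)"
      using False by (intro order_tendstoD(1)[OF tendsto_ident_at]) auto
    have "eventually (\<lambda>s. T (Suc k) x s = (1 - u) * T k (sh [Two] x) ((s - u) / (1 - u))) (at_left t)"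
      using ev by eventually_elim (auto simp: u_def[symmetric])
    moreover have "((\<lambda>s. (1 - u) * T k (sh [Two] x) ((s - u) / (1 - u))) \<longlongrightarrow> (1 - u) * l) (at_left t)"
      by (intro tendsto_mult tendsto_const filterlim_compose[OF l filterlim_div_left]) (use u1 in auto)
    ultimately show ?thesis by (auto simp: tendsto_cong)
  qed
qed

lemma Yf_unif:
  assumes "good x"
  shows "uniform_limit {0..<1} (\<lambda>n s. \<Sum>k<n. T k x s) (\<lambda>s. \<Sum>k. T k x s) sequentially"
  by (rule Weierstrass_m_test[OF _ Mb_summable[OF good_Phi[OF assms]]])
     (use good_T_Mb[OF assms] in auto)

lemma Yf_RC:
  assumes g: "good x" and t: "0 \<le> t" "t < 1"
  shows "continuous (at_right t) (Yf x)"
proof -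
  have ev01: "\<forall>\<^sub>F s in at_right t. s \<in> {0..<1}"
    using ev_right_greater[of t] order_tendstoD(2)[OF tendsto_ident_at t(2), of "{t<..}"]
    by eventually_elim (use t in auto)
  have "((\<lambda>s. \<Sum>k. T k x s) \<longlongrightarrow> (\<Sum>k. T k x t)) (at_right t)"
  proof (rule swap_uniform_limit'[OF _ _ Yf_unif[OF g] ev01])
    show "\<forall>\<^sub>F n in sequentially. ((\<lambda>s. \<Sum>k<n. T k x s) \<longlongrightarrow> (\<Sum>k<n. T k x t)) (at_right t)"
      by (intro always_eventually allI tendsto_sum T_RC t)
    show "(\<lambda>n. \<Sum>k<n. T k x t) \<longlonglongrightarrow> (\<Sum>k. T k x t)"
      by (rule summable_LIMSEQ[OF good_T_summable[OF g t]])
  qed simp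
  moreover have "\<forall>\<^sub>F s in at_right t. (\<Sum>k. T k x s) = Yf x s"
    using ev01 by eventually_elim (auto simp: Yf_def)
  ultimately have "(Yf x \<longlongrightarrow> (\<Sum>k. T k x t)) (at_right t)"
    by (simp add: tendsto_cong)
  then show ?thesis using t by (simp add: continuous_within Yf_def)
qed

lemma Yf_LL:
  assumes g: "good x" and t: "0 < t" "t \<le> 1"
  shows "\<exists>l. (Yf x \<longlongrightarrow> l) (at_left t)"
proof -
  define ll where "ll k = (SOME l. (T k x \<longlongrightarrow> l) (at_left t))" for k
  have ll: "(T k x \<longlongrightarrow> ll k) (at_left t)" for k
    unfolding ll_def by (rule someI_ex) (rule T_LL[OF t])
  have ev01: "\<forall>\<^sub>F s in at_left t. s \<in> {0..<1}"
    using ev_left_less[of t] order_tendstoD(1)[OF tendsto_ident_at t(1), of "{..<t}"]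
    by eventually_elim (use t in auto)
  have llb: "\<bar>ll k\<bar> \<le> Mb k x" for k
  proof (rule tendsto_upperbound[OF tendsto_rabs[OF ll[of k]]])
    show "\<forall>\<^sub>F s in at_left t. \<bar>T k x s\<bar> \<le> Mb k x"
      using ev01 by eventually_elim (use good_T_Mb[OF g] in auto)
  qed simp
  have sll: "summable ll"
    by (rule summable_comparison_test[OF _ Mb_summable[OF good_Phi[OF g]]])
       (use llb in \<open>auto intro!: exI[of _ 0]\<close>)
  have "((\<lambda>s. \<Sum>k. T k x s) \<longlongrightarrow> (\<Sum>k. ll k)) (at_left t)"
  proof (rule swap_uniform_limit'[OF _ _ Yf_unif[OF g] ev01])
    show "\<forall>\<^sub>F n in sequentially. ((\<lambda>s. \<Sum>k<n. T k x s) \<longlongrightarrow> (\<Sum>k<n. ll k)) (at_left t)"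
      by (intro always_eventually allI tendsto_sum ll)
    show "(\<lambda>n. \<Sum>k<n. ll k) \<longlonglongrightarrow> (\<Sum>k. ll k)"
      by (rule summable_LIMSEQ[OF sll])
  qed simp
  moreover have "\<forall>\<^sub>F s in at_left t. (\<Sum>k. T k x s) = Yf x s"
    using ev01 by eventually_elim (auto simp: Yf_def)
  ultimately show ?thesis
    by (auto simp: tendsto_cong)
qed

lemma cadlag_Yf: "good x \<Longrightarrow> cadlag (Yf x)"
  unfolding cadlag_def using Yf_RC Yf_LL by (auto simp: Yf_def)

definition F :: "seqs \<Rightarrow> real \<Rightarrow> real" where
  "F x = (if good x then Yf x else (\<lambda>_. 0))"

lemma cadlag_0: "cadlag (\<lambda>_. 0)"
  unfolding cadlag_def by (auto intro!: continuous_intros)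

lemma F_D: "F x \<in> D_set"
  unfolding D_set_def F_def using cadlag_Yf cadlag_0 by auto

lemma measurable_good[measurable]: "Measurable.pred PS good"
  unfolding good_def by measurable

lemma measurable_T: "(\<lambda>z. T k (fst z) (snd z)) \<in> borel_measurable (PS \<Otimes>\<^sub>M borel)"
proof (induction k)
  case 0
  show ?case by simp measurable
next
  case (Suc k)
  have m1: "(\<lambda>z. (sh [One] (fst z), snd z / p (fst z))) \<in> measurable (PS \<Otimes>\<^sub>M borel) (PS \<Otimes>\<^sub>M borel)"
    by measurable
  have m2: "(\<lambda>z. (sh [Two] (fst z), (snd z - p (fst z)) / (1 - p (fst z)))) \<in> measurable (PS \<Otimes>\<^sub>M borel) (PS \<Otimes>\<^sub>M borel)"
    by measurable
  note [measurable] = measurable_compose[OF m1 Suc.IH, simplified]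
    measurable_compose[OF m2 Suc.IH, simplified]
  show ?case by simp measurable
qed

lemma measurable_T_fix[measurable]: "(\<lambda>x. T k x t) \<in> borel_measurable PS"
  using measurable_compose[OF _ measurable_T[of k], of "\<lambda>x. (x, t)" PS] by simp

lemma measurable_F: "F \<in> measurable PS D_meas"
  unfolding D_meas_def
proof (rule measurable_restrict_space2)
  show "F \<in> space PS \<rightarrow> D_set" using F_D by auto
  show "F \<in> measurable PS (Pi\<^sub>M UNIV (\<lambda>_. borel))"
  proof (rule measurable_PiM_single')
    fix t :: real
    have "(\<lambda>x. F x t) = (\<lambda>x. if good x then (if 0 \<le> t \<and> t < 1 then \<Sum>k. T k x t else if t = 1 then Q x else 0) else 0)"
      by (auto simp: F_def Yf_def fun_eq_iff)
    also have "\<dots> \<in> borel_measurable PS"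
      by (intro measurable_If measurable_good) measurable
    finally show "(\<lambda>x. F x t) \<in> borel_measurable PS" .
  qed (auto simp: space_PiM)
qed

definition Xf :: "(letter list \<Rightarrow> 'a \<Rightarrow> real) \<Rightarrow> 'a \<Rightarrow> seqs" where
  "Xf U \<omega> = (\<lambda>w. U w \<omega>)"

lemma sh_Xf: "sh v (Xf U \<omega>) = Xf (\<lambda>w. U (v @ w)) \<omega>"
  by (simp add: sh_def Xf_def)

abbreviation mu :: "real measure" where "mu \<equiv> uniform_measure lborel {0..1}"

lemma prob_space_mu: "prob_space mu"
  by (intro prob_space_uniform_measure) auto

lemma sets_mu[measurable_cong, simp]: "sets mu = sets borel"
  by simp

definition emb :: "letter list set \<Rightarrow> seqs \<Rightarrow> seqs" where
  "emb I y = (\<lambda>i. if i \<in> I then y i else 0)"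

lemma emb_measurable: "emb I \<in> measurable (Pi\<^sub>M I (\<lambda>_. borel)) PS"
proof (rule measurable_PiM_single')
  fix i :: "letter list"
  show "(\<lambda>y. emb I y i) \<in> borel_measurable (Pi\<^sub>M I (\<lambda>_. borel))"
    by (cases "i \<in> I") (simp_all add: emb_def)
qed (auto simp: space_PiM)

locale fam = prob_space M for M :: "'a measure" +
  fixes U :: "letter list \<Rightarrow> 'a \<Rightarrow> real"
  assumes indep: "indep_vars (\<lambda>_. borel) U UNIV"
    and measU[measurable]: "\<And>v. U v \<in> borel_measurable M"
    and unif: "\<And>v. distr M lborel (U v) = mu"
begin

lemma measX[measurable]: "Xf U \<in> measurable M PS"
  unfolding Xf_def by (rule measurable_PiM_single') (auto simp: space_PiM)

lemma distr_U: "distr M borel (U v) = mu"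
proof -
  have "distr M borel (U v) = distr M lborel (U v)" by (intro distr_cong) auto
  then show ?thesis using unif by simp
qed

lemma lawX: "distr M PS (Xf U) = Pi\<^sub>M UNIV (\<lambda>_. mu)"
proof -
  have "distr M (Pi\<^sub>M UNIV (\<lambda>_. borel)) (\<lambda>x. \<lambda>i\<in>UNIV. U i x) = (Pi\<^sub>M UNIV (\<lambda>i. distr M borel (U i)))"
    using indep by (subst indep_vars_iff_distr_eq_PiM[symmetric]) auto
  moreover have "(\<lambda>x. \<lambda>i\<in>UNIV. U i x) = Xf U" by (auto simp: Xf_def fun_eq_iff)
  ultimately show ?thesis by (simp add: distr_U)
qed

lemma fam_shift: "fam M (\<lambda>w. U (v @ w))"
proof
  show "(\<lambda>w. U (v @ w)) w \<in> borel_measurable M" for w by simp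
  show "distr M lborel ((\<lambda>w. U (v @ w)) w) = mu" for w using unif by simp
  have mr: "(\<lambda>\<omega>. \<lambda>n\<in>UNIV. \<omega> (v @ n)) \<in> measurable PS PS"
    by (rule measurable_PiM_single') (auto simp: space_PiM)
  have "distr M PS (\<lambda>x. \<lambda>i\<in>UNIV. U (v @ i) x) = distr (distr M PS (Xf U)) PS (\<lambda>\<omega>. \<lambda>n\<in>UNIV. \<omega> (v @ n))"
    by (subst distr_distr[OF mr measX]) (simp add: comp_def Xf_def)
  also have "\<dots> = distr (Pi\<^sub>M UNIV (\<lambda>_. mu)) (Pi\<^sub>M UNIV (\<lambda>i. (\<lambda>_. mu) ((\<lambda>n. v @ n) i))) (\<lambda>\<omega>. \<lambda>n\<in>UNIV. \<omega> (v @ n))"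
    unfolding lawX by (intro distr_cong) (auto intro!: sets_PiM_cong)
  also have "\<dots> = Pi\<^sub>M UNIV (\<lambda>_. mu)"
    by (subst distr_PiM_reindex) (auto simp: prob_space_mu inj_on_def)
  also have "\<dots> = Pi\<^sub>M UNIV (\<lambda>i. distr M borel (U (v @ i)))" by (simp add: distr_U)
  finally show "indep_vars (\<lambda>_. borel) (\<lambda>w. U (v @ w)) UNIV"
    by (subst indep_vars_iff_distr_eq_PiM) auto
qed

lemma law_shift: "distr M PS (\<lambda>\<omega>. sh v (Xf U \<omega>)) = Pi\<^sub>M UNIV (\<lambda>_. mu)"
  using fam.lawX[OF fam_shift[of v]] by (simp add: sh_Xf)

lemma restrict_indep:
  fixes f g :: "seqs \<Rightarrow> 'b::{second_countable_topology, topological_space}"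
  assumes "I \<inter> J = {}" and that: "f \<in> borel_measurable PS" "g \<in> borel_measurable PS"
  shows "indep_var borel (\<lambda>\<omega>. f (emb I (restrict (Xf U \<omega>) I))) borel (\<lambda>\<omega>. g (emb J (restrict (Xf U \<omega>) J)))"
proof -
  have iv: "indep_var (Pi\<^sub>M I (\<lambda>_. borel)) (\<lambda>\<omega>. restrict (\<lambda>i. U i \<omega>) I) (Pi\<^sub>M J (\<lambda>_. borel)) (\<lambda>\<omega>. restrict (\<lambda>i. U i \<omega>) J)"
    by (rule indep_var_restrict[OF indep]) (use assms in auto)
  have "indep_var borel ((f \<circ> emb I) \<circ> (\<lambda>\<omega>. restrict (\<lambda>i. U i \<omega>) I)) borel ((g \<circ> emb J) \<circ> (\<lambda>\<omega>. restrict (\<lambda>i. U i \<omega>) J))"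
    by (rule indep_var_compose[OF iv])
       (use measurable_comp[OF emb_measurable that(1), of I] measurable_comp[OF emb_measurable that(2), of J] in auto)
  then show ?thesis by (simp add: comp_def Xf_def)
qed

end

definition dep :: "(seqs \<Rightarrow> 'b) \<Rightarrow> letter list set \<Rightarrow> bool" where
  "dep f I \<longleftrightarrow> (\<forall>x y. (\<forall>i\<in>I. x i = y i) \<longrightarrow> f x = f y)"

lemma dep_restrict: "dep f I \<Longrightarrow> f (emb I (restrict x I)) = f x"
  unfolding dep_def emb_def by auto

context fam begin

lemma indep_mult:
  fixes f g :: "seqs \<Rightarrow> real"
  assumes [measurable]: "f \<in> borel_measurable PS" "g \<in> borel_measurable PS"
    and d: "dep f I" "dep g J" "I \<inter> J = {}"
    and b: "\<And>x. \<bar>f x\<bar> \<le> Bf" "\<And>x. \<bar>g x\<bar> \<le> Bg"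
  shows "(\<integral>\<omega>. f (Xf U \<omega>) * g (Xf U \<omega>) \<partial>M) = (\<integral>\<omega>. f (Xf U \<omega>) \<partial>M) * (\<integral>\<omega>. g (Xf U \<omega>) \<partial>M)"
proof -
  have iv: "indep_var borel (\<lambda>\<omega>. f (emb I (restrict (Xf U \<omega>) I))) borel (\<lambda>\<omega>. g (emb J (restrict (Xf U \<omega>) J)))"
    by (rule restrict_indep) (use d in auto)
  then have iv': "indep_var borel (\<lambda>\<omega>. f (Xf U \<omega>)) borel (\<lambda>\<omega>. g (Xf U \<omega>))"
    by (simp add: dep_restrict[OF d(1)] dep_restrict[OF d(2)])
  have i1: "integrable M (\<lambda>\<omega>. f (Xf U \<omega>))"
    by (rule integrable_const_bound[where B=Bf]) (auto simp: b)
  have i2: "integrable M (\<lambda>\<omega>. g (Xf U \<omega>))"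
    by (rule integrable_const_bound[where B=Bg]) (auto simp: b)
  show ?thesis
    by (rule indep_var_lebesgue_integral[OF iv' i1 i2])
qed

lemma indep_mult_nn:
  fixes f g :: "seqs \<Rightarrow> ennreal"
  assumes [measurable]: "f \<in> borel_measurable PS" "g \<in> borel_measurable PS"
    and d: "dep f I" "dep g J" "I \<inter> J = {}"
  shows "(\<integral>\<^sup>+\<omega>. f (Xf U \<omega>) * g (Xf U \<omega>) \<partial>M) = (\<integral>\<^sup>+\<omega>. f (Xf U \<omega>) \<partial>M) * (\<integral>\<^sup>+\<omega>. g (Xf U \<omega>) \<partial>M)"
proof -
  have iv: "indep_var borel (\<lambda>\<omega>. f (emb I (restrict (Xf U \<omega>) I))) borel (\<lambda>\<omega>. g (emb J (restrict (Xf U \<omega>) J)))"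
    by (rule restrict_indep) (use d in auto)
  then have iv': "indep_var borel (\<lambda>\<omega>. f (Xf U \<omega>)) borel (\<lambda>\<omega>. g (Xf U \<omega>))"
    by (simp add: dep_restrict[OF d(1)] dep_restrict[OF d(2)])
  have **: "(\<lambda> _. borel) = case_bool borel borel"
    by (rule ext, metis (full_types) bool.simps(3) bool.simps(4))
  have iv2: "indep_vars (\<lambda>_. borel) (case_bool (\<lambda>\<omega>. f (Xf U \<omega>)) (\<lambda>\<omega>. g (Xf U \<omega>))) UNIV"
    using iv' unfolding indep_var_def by (subst **)
  have "(\<integral>\<^sup>+\<omega>. (\<Prod>i\<in>UNIV. case_bool (\<lambda>\<omega>. f (Xf U \<omega>)) (\<lambda>\<omega>. g (Xf U \<omega>)) i \<omega>) \<partial>M) =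
      (\<Prod>i\<in>UNIV. \<integral>\<^sup>+\<omega>. case_bool (\<lambda>\<omega>. f (Xf U \<omega>)) (\<lambda>\<omega>. g (Xf U \<omega>)) i \<omega> \<partial>M)"
    by (rule indep_vars_nn_integral[OF _ iv2]) auto
  then show ?thesis by (simp add: UNIV_bool mult.commute)
qed

end

definition gfun :: "real \<Rightarrow> real" where "gfun y = y * ln y"

lemma gfun_cont: "continuous_on {0..1} gfun"
  unfolding gfun_def by (rule continuous_on_subset[OF g_cont]) auto

lemma clamp_id: "x \<in> {0..1} \<Longrightarrow> clamp x = x"
  by (auto simp: clamp_def)

lemma int_sq: "((\<lambda>x. (clamp x)^2) has_integral 1/3) {0..1}"
proof -
  have "((\<lambda>x::real. x^2) has_integral ((\<lambda>x. x^3/3) 1 - (\<lambda>x. x^3/3) 0)) {0..1}"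
    by (rule fundamental_theorem_of_calculus_interior)
       (auto intro!: continuous_intros derivative_eq_intros simp: has_real_derivative_iff_has_vector_derivative[symmetric])
  then have "((\<lambda>x::real. x^2) has_integral 1/3) {0..1}" by simp
  then show ?thesis by (rule has_integral_eq[rotated]) (auto simp: clamp_id)
qed

lemma int_sq1: "((\<lambda>x. (1 - clamp x)^2) has_integral 1/3) {0..1}"
proof -
  have "((\<lambda>x::real. (1 - x)^2) has_integral ((\<lambda>x. - ((1 - x)^3) / 3) 1 - (\<lambda>x. - ((1 - x)^3) / 3) 0)) {0..1}"
    by (rule fundamental_theorem_of_calculus_interior)
       (auto intro!: continuous_intros derivative_eq_intros simp: has_real_derivative_iff_has_vector_derivative[symmetric]
         power2_eq_square)
  then have "((\<lambda>x::real. (1 - x)^2) has_integral 1/3) {0..1}" by simp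
  then show ?thesis by (rule has_integral_eq[rotated]) (auto simp: clamp_id)
qed

definition Gf :: "real \<Rightarrow> real" where "Gf x = x^2/4 - x * gfun x / 2"

lemma Gf_cont: "continuous_on {0..1} Gf"
  unfolding Gf_def
  by (intro continuous_on_diff continuous_on_divide continuous_on_mult continuous_on_id continuous_on_const
      continuous_on_power gfun_cont) auto

lemma Gf_deriv: "0 < y \<Longrightarrow> (Gf has_real_derivative - (y * ln y)) (at y)"
  unfolding Gf_def gfun_def
  by (auto intro!: derivative_eq_intros simp: field_simps power2_eq_square)

lemma int_ng: "((\<lambda>x. - (clamp x * ln (clamp x))) has_integral 1/4) {0..1}"
proof -
  have "((\<lambda>x::real. - (x * ln x)) has_integral (Gf 1 - Gf 0)) {0..1}"
  proof (rule fundamental_theorem_of_calculus_interior)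
    show "continuous_on {0..1} Gf" by (rule Gf_cont)
    fix x :: real assume x: "x \<in> {0<..<1}"
    then show "(Gf has_vector_derivative - (x * ln x)) (at x)"
      using Gf_deriv[of x] by (simp add: has_real_derivative_iff_has_vector_derivative)
  qed simp
  moreover have "Gf 1 - Gf 0 = 1/4" by (simp add: Gf_def gfun_def)
  ultimately have "((\<lambda>x::real. - (x * ln x)) has_integral 1/4) {0..1}" by simp
  then show ?thesis by (rule has_integral_eq[rotated]) (auto simp: clamp_id)
qed

lemma int_ng1: "((\<lambda>x. - ((1 - clamp x) * ln (1 - clamp x))) has_integral 1/4) {0..1}"
proof -
  define H where "H x = - Gf (1 - x)" for x :: real
  have "((\<lambda>x::real. - ((1 - x) * ln (1 - x))) has_integral (H 1 - H 0)) {0..1}"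
  proof (rule fundamental_theorem_of_calculus_interior)
    have c: "continuous_on {0..1} (\<lambda>x::real. Gf (1 - x))"
      by (rule continuous_on_compose2[OF Gf_cont]) (auto intro!: continuous_intros)
    show "continuous_on {0..1} H" unfolding H_def
      by (intro continuous_on_minus c)
    fix x :: real assume x: "x \<in> {0<..<1}"
    have "((\<lambda>x. Gf (1 - x)) has_real_derivative (- ((1 - x) * ln (1 - x))) * (-1)) (at x)"
      by (rule DERIV_chain2[OF Gf_deriv]) (use x in \<open>auto intro!: derivative_eq_intros\<close>)
    then have "(H has_real_derivative - ((1 - x) * ln (1 - x))) (at x)"
      unfolding H_def using DERIV_minus by fastforce
    then show "(H has_vector_derivative - ((1 - x) * ln (1 - x))) (at x)"
      by (simp add: has_real_derivative_iff_has_vector_derivative)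
  qed simp
  moreover have "H 1 - H 0 = 1/4" by (simp add: H_def Gf_def gfun_def)
  ultimately have "((\<lambda>x::real. - ((1 - x) * ln (1 - x))) has_integral 1/4) {0..1}" by simp
  then show ?thesis by (rule has_integral_eq[rotated]) (auto simp: clamp_id)
qed

context fam begin

lemma nn_U:
  assumes [measurable]: "h \<in> borel_measurable borel" and h0: "\<And>x. 0 \<le> h x"
    and hi: "(h has_integral r) {0..1}"
  shows "(\<integral>\<^sup>+\<omega>. ennreal (h (U v \<omega>)) \<partial>M) = ennreal r"
proof -
  have "(\<integral>\<^sup>+\<omega>. ennreal (h (U v \<omega>)) \<partial>M) = (\<integral>\<^sup>+x. ennreal (h x) \<partial>distr M borel (U v))"
    by (subst nn_integral_distr) auto
  also have "\<dots> = (\<integral>\<^sup>+x. ennreal (h x) \<partial>mu)" by (simp add: distr_U)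
  also have "\<dots> = (\<integral>\<^sup>+x. ennreal (h x) * indicator {0..1} x \<partial>lborel) / 1"
    by (subst nn_integral_uniform_measure) auto
  also have "(\<integral>\<^sup>+x. ennreal (h x) * indicator {0..1} x \<partial>lborel) = (\<integral>\<^sup>+x. ennreal (if x \<in> {0..1} then h x else 0) \<partial>lborel)"
    by (intro nn_integral_cong) (auto split: split_indicator)
  also have "\<dots> = ennreal r"
    by (rule nn_integral_has_integral_lborel) (use h0 has_integral_restrict_UNIV[of "{0..1}" h r] hi in auto)
  finally show ?thesis by (simp add: divide_ennreal_def)
qed

lemma E_p2: "(\<integral>\<^sup>+\<omega>. ennreal ((p (Xf U \<omega>))^2) \<partial>M) = ennreal (1/3)"
  using nn_U[OF _ _ int_sq, of "[]"] by (simp add: p_def Xf_def clamp_def)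

lemma E_q2: "(\<integral>\<^sup>+\<omega>. ennreal ((1 - p (Xf U \<omega>))^2) \<partial>M) = ennreal (1/3)"
  using nn_U[OF _ _ int_sq1, of "[]"] by (simp add: p_def Xf_def clamp_def)

lemma E_p2_real: "(\<integral>\<omega>. (p (Xf U \<omega>))^2 \<partial>M) = 1/3"
  by (subst integral_eq_nn_integral) (auto simp: E_p2)

lemma E_q2_real: "(\<integral>\<omega>. (1 - p (Xf U \<omega>))^2 \<partial>M) = 1/3"
  by (subst integral_eq_nn_integral) (auto simp: E_q2)

lemma E_ng: "(\<integral>\<omega>. - (p (Xf U \<omega>) * ln (p (Xf U \<omega>))) \<partial>M) = 1/4"
proof -
  have "(\<integral>\<^sup>+\<omega>. ennreal (- (clamp (U [] \<omega>) * ln (clamp (U [] \<omega>)))) \<partial>M) = ennreal (1/4)"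
    by (rule nn_U[OF _ _ int_ng]) (use g_bounds[of "clamp _"] in \<open>auto simp: clamp_def\<close>)
  then show ?thesis
    by (subst integral_eq_nn_integral)
       (use g_bounds[of "clamp _"] in \<open>auto simp: p_def Xf_def clamp_def\<close>)
qed

end

lemma measurable_clamp[measurable]: "clamp \<in> borel_measurable borel"
  unfolding clamp_def by measurable

lemma bound3: fixes a b :: real
  assumes "0 \<le> a" "a \<le> 1" "\<bar>b\<bar> \<le> B" shows "\<bar>a * b\<bar> \<le> B"
proof -
  have "\<bar>a * b\<bar> = a * \<bar>b\<bar>" using assms by (simp add: abs_mult)
  also have "\<dots> \<le> \<bar>b\<bar>" using assms by (intro mult_left_le_one_le) auto
  finally show ?thesis using assms by simp
qed

lemma sh_eq: "(\<And>w. x (a # w) = y (a # w)) \<Longrightarrow> sh [a] x = sh [a] y"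
  by (auto simp: sh_def fun_eq_iff)

lemma dep_p: "dep (\<lambda>x. f (p x)) {[]}"
  unfolding dep_def p_def by auto

lemma dep_sh: "dep (\<lambda>x. f (sh [a] x)) (range ((#) a))"
  unfolding dep_def by (metis rangeI sh_eq)

lemma dep_p_sh: "dep (\<lambda>x. f (p x) (sh [a] x)) ({[]} \<union> range ((#) a))"
  unfolding dep_def p_def
proof (intro allI impI)
  fix x y :: seqs assume h: "\<forall>i\<in>{[]} \<union> range ((#) a). x i = y i"
  then have "sh [a] x = sh [a] y" by (intro sh_eq) auto
  moreover have "x [] = y []" using h by auto
  ultimately show "f (clamp (x [])) (sh [a] x) = f (clamp (y [])) (sh [a] y)" by simp
qed

context fam begin

lemma E_ng1: "(\<integral>\<omega>. - ((1 - p (Xf U \<omega>)) * ln (1 - p (Xf U \<omega>))) \<partial>M) = 1/4"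
proof -
  have b: "0 \<le> - ((1 - clamp u) * ln (1 - clamp u))" for u
    using g_bounds[of "1 - clamp u"] by (auto simp: clamp_def)
  have "(\<integral>\<^sup>+\<omega>. ennreal (- ((1 - clamp (U [] \<omega>)) * ln (1 - clamp (U [] \<omega>)))) \<partial>M) = ennreal (1/4)"
    by (rule nn_U[OF _ _ int_ng1]) (use b in auto)
  then show ?thesis
    by (subst integral_eq_nn_integral) (use b in \<open>auto simp: p_def Xf_def\<close>)
qed

lemma E_S0: "(\<integral>\<omega>. S 0 (Xf U \<omega>) \<partial>M) = 0"
proof -
  define a where "a \<omega> = - (p (Xf U \<omega>) * ln (p (Xf U \<omega>)))" for \<omega>
  define b where "b \<omega> = - ((1 - p (Xf U \<omega>)) * ln (1 - p (Xf U \<omega>)))" for \<omega>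
  have ia: "integrable M a" unfolding a_def
    by (rule integrable_const_bound[where B=1]) (use g_bounds[of "p _"] in auto)
  have ib: "integrable M b" unfolding b_def
    by (rule integrable_const_bound[where B=1]) (use g_bounds[of "1 - p _"] in auto)
  have "(\<lambda>\<omega>. S 0 (Xf U \<omega>)) = (\<lambda>\<omega>. 1 - 2 * a \<omega> - 2 * b \<omega>)"
    by (auto simp: a_def b_def Cx_def fun_eq_iff algebra_simps)
  then have "(\<integral>\<omega>. S 0 (Xf U \<omega>) \<partial>M) = (\<integral>\<omega>. 1 - 2 * a \<omega> - 2 * b \<omega> \<partial>M)" by simp
  also have "\<dots> = 1 - 2 * (\<integral>\<omega>. a \<omega> \<partial>M) - 2 * (\<integral>\<omega>. b \<omega> \<partial>M)"
    using ia ib by (simp add: prob_space)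
  also have "\<dots> = 0" using E_ng E_ng1 by (simp add: a_def b_def)
  finally show ?thesis .
qed

end

lemma E_S: "fam M U \<Longrightarrow> (\<integral>\<omega>. S j (Xf U \<omega>) \<partial>M) = 0"
proof (induction j arbitrary: U)
  case 0 then show ?case using fam.E_S0 by blast
next
  case (Suc j)
  interpret fam M U by fact
  have IH1: "(\<integral>\<omega>. S j (sh [a] (Xf U \<omega>)) \<partial>M) = 0" for a
    unfolding sh_Xf by (intro Suc.IH fam_shift)
  have i1: "integrable M (\<lambda>\<omega>. p (Xf U \<omega>) * S j (sh [a] (Xf U \<omega>)))" for a
    by (rule integrable_const_bound[where B=3])
       (auto intro!: bound3 S_bound)
  have i2: "integrable M (\<lambda>\<omega>. (1 - p (Xf U \<omega>)) * S j (sh [a] (Xf U \<omega>)))" for a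
    by (rule integrable_const_bound[where B=3])
       (auto intro!: bound3 S_bound)
  have e1: "(\<integral>\<omega>. p (Xf U \<omega>) * S j (sh [One] (Xf U \<omega>)) \<partial>M) = 0"
    using indep_mult[where f = "\<lambda>x. p x" and g = "\<lambda>x. S j (sh [One] x)" and I = "{[]}"
        and J = "range ((#) One)" and Bf = 1 and Bg = 3]
      dep_p[of "\<lambda>x. x"] dep_sh[of "S j" One] S_bound IH1 by auto
  have e2: "(\<integral>\<omega>. (1 - p (Xf U \<omega>)) * S j (sh [Two] (Xf U \<omega>)) \<partial>M) = 0"
    using indep_mult[where f = "\<lambda>x. 1 - p x" and g = "\<lambda>x. S j (sh [Two] x)" and I = "{[]}"
        and J = "range ((#) Two)" and Bf = 1 and Bg = 3]
      dep_p[of "\<lambda>x. 1 - x"] dep_sh[of "S j" Two] S_bound IH1 by auto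
  show ?case using i1 i2 e1 e2 by simp
qed

lemma sq_le9: "\<bar>x\<bar> \<le> 3 \<Longrightarrow> x^2 \<le> (9::real)"
proof -
  assume "\<bar>x\<bar> \<le> 3"
  then have "\<bar>x\<bar>^2 \<le> 3^2" by (intro power_mono) auto
  then show ?thesis by simp
qed

lemma (in fam) int_bounded:
  fixes f :: "seqs \<Rightarrow> real" and B :: real
  assumes "f \<in> borel_measurable PS" "\<And>x. \<bar>f x\<bar> \<le> B"
  shows "integrable M (\<lambda>\<omega>. f (Xf U \<omega>))"
  by (rule integrable_const_bound[where B=B]) (use assms in auto)

lemma E_S2: "fam M U \<Longrightarrow> (\<integral>\<omega>. (S j (Xf U \<omega>))^2 \<partial>M) \<le> 9 * (2/3)^j"
proof (induction j arbitrary: U)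
  case 0
  interpret fam M U by fact
  have "(\<integral>\<omega>. (S 0 (Xf U \<omega>))^2 \<partial>M) \<le> (\<integral>\<omega>. 9 \<partial>M)"
    by (rule integral_mono) (auto intro!: int_bounded[where B=9] sq_le9 S_bound Cx_bound)
  then show ?case by (simp add: prob_space)
next
  case (Suc j)
  interpret fam M U by fact
  have IH1: "(\<integral>\<omega>. (S j (sh [a] (Xf U \<omega>)))^2 \<partial>M) \<le> 9 * (2/3)^j" for a
    unfolding sh_Xf by (intro Suc.IH fam_shift)
  have E1: "(\<integral>\<omega>. S j (sh [a] (Xf U \<omega>)) \<partial>M) = 0" for a
    unfolding sh_Xf by (intro E_S fam_shift)
  define P where "P x = p x" for x
  define A where "A x = S j (sh [One] x)" for x
  define B where "B x = S j (sh [Two] x)" for x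
  have [measurable]: "P \<in> borel_measurable PS" "A \<in> borel_measurable PS" "B \<in> borel_measurable PS"
    unfolding P_def A_def B_def by measurable
  have bA: "\<bar>A x\<bar> \<le> 3" "\<bar>B x\<bar> \<le> 3" for x unfolding A_def B_def by (rule S_bound)+
  have bP: "0 \<le> P x" "P x \<le> 1" for x unfolding P_def by auto
  have sq: "(S (Suc j) x)^2 = (P x)^2 * (A x)^2 + (1 - P x)^2 * (B x)^2 + 2 * ((P x * (1 - P x) * A x) * B x)" for x
    by (simp add: P_def A_def B_def power2_eq_square algebra_simps)
  have b1: "\<bar>(P x)^2 * (A x)^2\<bar> \<le> 9" for x
    using bound3[of "(P x)^2" "(A x)^2" 9] bP[of x] sq_le9[OF bA(1)[of x]] by (simp add: power_le_one)
  have b2: "\<bar>(1 - P x)^2 * (B x)^2\<bar> \<le> 9" for x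
    using bound3[of "(1 - P x)^2" "(B x)^2" 9] bP[of x] sq_le9[OF bA(2)[of x]] by (simp add: power_le_one)
  have b3: "\<bar>P x * (1 - P x) * A x\<bar> \<le> 3" for x
    using bound3[of "P x * (1 - P x)" "A x" 3] bP[of x] bA(1)[of x] by (simp add: mult_le_one)
  have b4: "\<bar>(P x * (1 - P x) * A x) * B x\<bar> \<le> 9" for x
  proof -
    have "\<bar>(P x * (1 - P x) * A x) * B x\<bar> = \<bar>P x * (1 - P x) * A x\<bar> * \<bar>B x\<bar>" by (rule abs_mult)
    also have "\<dots> \<le> 3 * 3" by (rule mult_mono) (use b3 bA in auto)
    finally show ?thesis by simp
  qed
  have i1: "integrable M (\<lambda>\<omega>. (P (Xf U \<omega>))^2 * (A (Xf U \<omega>))^2)"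
    by (rule int_bounded[where f = "\<lambda>x. (P x)^2 * (A x)^2"]) (use b1 in auto)
  have i2: "integrable M (\<lambda>\<omega>. (1 - P (Xf U \<omega>))^2 * (B (Xf U \<omega>))^2)"
    by (rule int_bounded[where f = "\<lambda>x. (1 - P x)^2 * (B x)^2"]) (use b2 in auto)
  have i3: "integrable M (\<lambda>\<omega>. (P (Xf U \<omega>) * (1 - P (Xf U \<omega>)) * A (Xf U \<omega>)) * B (Xf U \<omega>))"
    by (rule int_bounded[where f = "\<lambda>x. (P x * (1 - P x) * A x) * B x" and B = 9])
       (use b4 in auto)
  have e1: "(\<integral>\<omega>. (P (Xf U \<omega>))^2 * (A (Xf U \<omega>))^2 \<partial>M) = (\<integral>\<omega>. (P (Xf U \<omega>))^2 \<partial>M) * (\<integral>\<omega>. (A (Xf U \<omega>))^2 \<partial>M)"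
    by (rule indep_mult[where I = "{[]}" and J = "range ((#) One)" and Bf = 1 and Bg = 9])
       (use dep_p[of "\<lambda>y. y^2"] dep_sh[of "\<lambda>z. (S j z)^2" One] bP sq_le9[OF bA(1)]
         in \<open>auto simp: P_def A_def power_le_one\<close>)
  have e2: "(\<integral>\<omega>. (1 - P (Xf U \<omega>))^2 * (B (Xf U \<omega>))^2 \<partial>M) = (\<integral>\<omega>. (1 - P (Xf U \<omega>))^2 \<partial>M) * (\<integral>\<omega>. (B (Xf U \<omega>))^2 \<partial>M)"
    by (rule indep_mult[where I = "{[]}" and J = "range ((#) Two)" and Bf = 1 and Bg = 9])
       (use dep_p[of "\<lambda>y. (1 - y)^2"] dep_sh[of "\<lambda>z. (S j z)^2" Two] bP sq_le9[OF bA(2)]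
         in \<open>auto simp: P_def B_def power_le_one\<close>)
  have e3: "(\<integral>\<omega>. (P (Xf U \<omega>) * (1 - P (Xf U \<omega>)) * A (Xf U \<omega>)) * B (Xf U \<omega>) \<partial>M)
      = (\<integral>\<omega>. P (Xf U \<omega>) * (1 - P (Xf U \<omega>)) * A (Xf U \<omega>) \<partial>M) * (\<integral>\<omega>. B (Xf U \<omega>) \<partial>M)"
    by (rule indep_mult[where I = "{[]} \<union> range ((#) One)" and J = "range ((#) Two)" and Bf = 3 and Bg = 3])
       (use dep_p_sh[of "\<lambda>q z. q * (1 - q) * S j z" One] dep_sh[of "S j" Two] b3 bA
         in \<open>auto simp: P_def A_def B_def\<close>)
  have "(\<integral>\<omega>. (S (Suc j) (Xf U \<omega>))^2 \<partial>M) =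
      (\<integral>\<omega>. (P (Xf U \<omega>))^2 * (A (Xf U \<omega>))^2 \<partial>M) + (\<integral>\<omega>. (1 - P (Xf U \<omega>))^2 * (B (Xf U \<omega>))^2 \<partial>M)
      + 2 * (\<integral>\<omega>. (P (Xf U \<omega>) * (1 - P (Xf U \<omega>)) * A (Xf U \<omega>)) * B (Xf U \<omega>) \<partial>M)"
    unfolding sq using i1 i2 i3 by simp
  also have "\<dots> = 1/3 * (\<integral>\<omega>. (A (Xf U \<omega>))^2 \<partial>M) + 1/3 * (\<integral>\<omega>. (B (Xf U \<omega>))^2 \<partial>M)"
    unfolding e1 e2 e3 unfolding P_def B_def unfolding E_p2_real E_q2_real E1[of Two] by simp
  also have "\<dots> \<le> 1/3 * (9 * (2/3)^j) + 1/3 * (9 * (2/3)^j)"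
    using IH1[of One] IH1[of Two] unfolding A_def B_def by (intro add_mono mult_left_mono) auto
  also have "\<dots> = 9 * (2/3)^Suc j" by simp
  finally show ?case .
qed

lemma sum45: "(\<Sum>j. ennreal (9 * (4/5)^j)) = ennreal 45"
proof -
  have s: "summable (\<lambda>j. 9 * (4/5::real)^j)" by (intro summable_mult summable_geometric) auto
  have "(\<Sum>j. 9 * (4/5::real)^j) = 45"
  proof -
    have g: "norm (4/5::real) < 1" by simp
    have "(\<Sum>j. 9 * (4/5::real)^j) = 9 * (\<Sum>j. (4/5::real)^j)"
      by (rule suminf_mult[OF summable_geometric[OF g]])
    also have "(\<Sum>j. (4/5::real)^j) = 1 / (1 - 4/5)"
      by (rule suminf_geometric[OF g])
    finally show ?thesis by simp
  qed
  moreover have "(\<Sum>j. ennreal (9 * (4/5)^j)) = ennreal (\<Sum>j. 9 * (4/5::real)^j)"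
    by (rule suminf_ennreal2[OF _ s]) simp
  ultimately show ?thesis by simp
qed

lemma E_Bn: "fam M U \<Longrightarrow> (\<integral>\<^sup>+\<omega>. Bn (Xf U \<omega>) \<partial>M) \<le> ennreal 45"
proof -
  assume "fam M U"
  interpret fam M U by fact
  have "(\<integral>\<^sup>+\<omega>. Bn (Xf U \<omega>) \<partial>M) = (\<Sum>j. \<integral>\<^sup>+\<omega>. ennreal ((6/5)^j * (S j (Xf U \<omega>))^2) \<partial>M)"
    unfolding Bn_def by (rule nn_integral_suminf) measurable
  also have "\<dots> \<le> (\<Sum>j. ennreal (9 * (4/5)^j))"
  proof (rule suminf_le)
    fix j
    have int: "integrable M (\<lambda>\<omega>. (6/5)^j * (S j (Xf U \<omega>))^2)"
      by (rule int_bounded[where f = "\<lambda>x. (6/5)^j * (S j x)^2" and B = "(6/5)^j * 9"])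
         (auto intro!: mult_left_mono sq_le9 S_bound)
    have "(\<integral>\<^sup>+\<omega>. ennreal ((6/5)^j * (S j (Xf U \<omega>))^2) \<partial>M) = ennreal (\<integral>\<omega>. (6/5)^j * (S j (Xf U \<omega>))^2 \<partial>M)"
      by (rule nn_integral_eq_integral[OF int]) auto
    also have "(\<integral>\<omega>. (6/5)^j * (S j (Xf U \<omega>))^2 \<partial>M) = (6/5)^j * (\<integral>\<omega>. (S j (Xf U \<omega>))^2 \<partial>M)"
      by simp
    also have "\<dots> \<le> (6/5)^j * (9 * (2/3)^j)"
      by (intro mult_left_mono E_S2) (auto intro: fam_axioms)
    also have "\<dots> = 9 * (4/5)^j"
      by (simp add: power_mult_distrib[symmetric])
    finally show "(\<integral>\<^sup>+\<omega>. ennreal ((6/5)^j * (S j (Xf U \<omega>))^2) \<partial>M) \<le> ennreal (9 * (4/5)^j)"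
      by (simp add: ennreal_leI)
  qed (rule summableI)+
  also have "\<dots> = ennreal 45" by (rule sum45)
  finally show ?thesis .
qed

lemma E_hp: "fam M U \<Longrightarrow> (\<integral>\<^sup>+\<omega>. hp (Xf U \<omega>) \<partial>M) \<le> ennreal (Cb + 45)"
proof -
  assume "fam M U"
  interpret fam M U by fact
  have "(\<integral>\<^sup>+\<omega>. hp (Xf U \<omega>) \<partial>M) = (\<integral>\<^sup>+\<omega>. ennreal Cb \<partial>M) + (\<integral>\<^sup>+\<omega>. Bn (sh [One] (Xf U \<omega>)) \<partial>M)"
    unfolding hp_def by (rule nn_integral_add) auto
  also have "(\<integral>\<^sup>+\<omega>. ennreal Cb \<partial>M) = ennreal Cb" by (simp add: emeasure_space_1)
  finally have e: "(\<integral>\<^sup>+\<omega>. hp (Xf U \<omega>) \<partial>M) = ennreal Cb + (\<integral>\<^sup>+\<omega>. Bn (sh [One] (Xf U \<omega>)) \<partial>M)" .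
  have "(\<integral>\<^sup>+\<omega>. Bn (sh [One] (Xf U \<omega>)) \<partial>M) \<le> ennreal 45"
    unfolding sh_Xf by (intro E_Bn fam_shift)
  then have "(\<integral>\<^sup>+\<omega>. hp (Xf U \<omega>) \<partial>M) \<le> ennreal Cb + ennreal 45"
    unfolding e by (rule add_left_mono)
  also have "ennreal Cb + ennreal 45 = ennreal (Cb + 45)"
    by (rule ennreal_plus[symmetric]) (auto simp: Cb_def)
  finally show ?thesis .
qed

lemma E_Rn: "fam M U \<Longrightarrow> (\<integral>\<^sup>+\<omega>. Rn k hp (Xf U \<omega>) \<partial>M) \<le> ennreal ((2/3)^k * (Cb + 45))"
proof (induction k arbitrary: U)
  case 0 then show ?case using E_hp by simp
next
  case (Suc k)
  interpret fam M U by fact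
  have IH1: "(\<integral>\<^sup>+\<omega>. Rn k hp (sh [a] (Xf U \<omega>)) \<partial>M) \<le> ennreal ((2/3)^k * (Cb + 45))" for a
    unfolding sh_Xf by (intro Suc.IH fam_shift)
  have "(\<integral>\<^sup>+\<omega>. Rn (Suc k) hp (Xf U \<omega>) \<partial>M) =
     (\<integral>\<^sup>+\<omega>. ennreal ((p (Xf U \<omega>))^2) * Rn k hp (sh [One] (Xf U \<omega>)) \<partial>M) +
     (\<integral>\<^sup>+\<omega>. ennreal ((1 - p (Xf U \<omega>))^2) * Rn k hp (sh [Two] (Xf U \<omega>)) \<partial>M)"
    by simp (rule nn_integral_add; measurable)
  also have "(\<integral>\<^sup>+\<omega>. ennreal ((p (Xf U \<omega>))^2) * Rn k hp (sh [One] (Xf U \<omega>)) \<partial>M) =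
      (\<integral>\<^sup>+\<omega>. ennreal ((p (Xf U \<omega>))^2) \<partial>M) * (\<integral>\<^sup>+\<omega>. Rn k hp (sh [One] (Xf U \<omega>)) \<partial>M)"
    by (rule indep_mult_nn[where f = "\<lambda>x. ennreal ((p x)^2)" and g = "\<lambda>x. Rn k hp (sh [One] x)"
          and I = "{[]}" and J = "range ((#) One)"])
       (use dep_p[of "\<lambda>y. ennreal (y^2)"] dep_sh[of "Rn k hp" One] in auto)
  also have "(\<integral>\<^sup>+\<omega>. ennreal ((1 - p (Xf U \<omega>))^2) * Rn k hp (sh [Two] (Xf U \<omega>)) \<partial>M) =
      (\<integral>\<^sup>+\<omega>. ennreal ((1 - p (Xf U \<omega>))^2) \<partial>M) * (\<integral>\<^sup>+\<omega>. Rn k hp (sh [Two] (Xf U \<omega>)) \<partial>M)"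
    by (rule indep_mult_nn[where f = "\<lambda>x. ennreal ((1 - p x)^2)" and g = "\<lambda>x. Rn k hp (sh [Two] x)"
          and I = "{[]}" and J = "range ((#) Two)"])
       (use dep_p[of "\<lambda>y. ennreal ((1 - y)^2)"] dep_sh[of "Rn k hp" Two] in auto)
  also have "(\<integral>\<^sup>+\<omega>. ennreal ((p (Xf U \<omega>))^2) \<partial>M) * (\<integral>\<^sup>+\<omega>. Rn k hp (sh [One] (Xf U \<omega>)) \<partial>M) +
      (\<integral>\<^sup>+\<omega>. ennreal ((1 - p (Xf U \<omega>))^2) \<partial>M) * (\<integral>\<^sup>+\<omega>. Rn k hp (sh [Two] (Xf U \<omega>)) \<partial>M)
     = ennreal (1/3) * (\<integral>\<^sup>+\<omega>. Rn k hp (sh [One] (Xf U \<omega>)) \<partial>M) +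
       ennreal (1/3) * (\<integral>\<^sup>+\<omega>. Rn k hp (sh [Two] (Xf U \<omega>)) \<partial>M)"
    by (simp only: E_p2 E_q2)
  also have "ennreal (1/3) * (\<integral>\<^sup>+\<omega>. Rn k hp (sh [One] (Xf U \<omega>)) \<partial>M) +
       ennreal (1/3) * (\<integral>\<^sup>+\<omega>. Rn k hp (sh [Two] (Xf U \<omega>)) \<partial>M)
     \<le> ennreal (1/3) * ennreal ((2/3)^k * (Cb + 45)) + ennreal (1/3) * ennreal ((2/3)^k * (Cb + 45))"
    by (intro add_mono mult_left_mono IH1) auto
  also have "\<dots> = ennreal ((2/3)^Suc k * (Cb + 45))"
  proof -
    have "ennreal (1/3) * ennreal ((2/3)^k * (Cb + 45)) = ennreal (1/3 * ((2/3)^k * (Cb + 45)))"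
      by (rule ennreal_mult[symmetric]) (auto simp: Cb_def)
    moreover have "ennreal (1/3 * ((2/3)^k * (Cb + 45))) + ennreal (1/3 * ((2/3)^k * (Cb + 45)))
        = ennreal (1/3 * ((2/3)^k * (Cb + 45)) + 1/3 * ((2/3)^k * (Cb + 45)))"
      by (rule ennreal_plus[symmetric]) (auto simp: Cb_def)
    moreover have "1/3 * ((2/3)^k * (Cb + 45)) + 1/3 * ((2/3)^k * (Cb + 45)) = (2/3::real)^Suc k * (Cb + 45)"
      by simp
    ultimately show ?thesis by metis
  qed
  finally show ?case .
qed

lemma sum_geo5: assumes "0 \<le> c" shows "(\<Sum>j. ennreal (c * (4/5)^j)) = ennreal (5 * c)"
proof -
  have g: "norm (4/5::real) < 1" by simp
  have s: "summable (\<lambda>j. c * (4/5::real)^j)" by (intro summable_mult summable_geometric g)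
  have "(\<Sum>j. c * (4/5::real)^j) = c * (\<Sum>j. (4/5::real)^j)"
    by (rule suminf_mult[OF summable_geometric[OF g]])
  also have "(\<Sum>j. (4/5::real)^j) = 1 / (1 - 4/5)"
    by (rule suminf_geometric[OF g])
  finally have e: "(\<Sum>j. c * (4/5::real)^j) = 5 * c" by simp
  have "(\<Sum>j. ennreal (c * (4/5)^j)) = ennreal (\<Sum>j. c * (4/5::real)^j)"
    by (rule suminf_ennreal2[OF _ s]) (use assms in simp)
  then show ?thesis using e by simp
qed

lemma E_Phi: "fam M U \<Longrightarrow> (\<integral>\<^sup>+\<omega>. Phi (Xf U \<omega>) \<partial>M) \<le> ennreal (5 * (Cb + 45))"
proof -
  assume "fam M U"
  interpret fam M U by fact
  have "(\<integral>\<^sup>+\<omega>. Phi (Xf U \<omega>) \<partial>M) = (\<Sum>k. \<integral>\<^sup>+\<omega>. ennreal ((6/5)^k) * Rn k hp (Xf U \<omega>) \<partial>M)"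
    unfolding Phi_def by (rule nn_integral_suminf) measurable
  also have "\<dots> \<le> (\<Sum>k. ennreal ((Cb + 45) * (4/5)^k))"
  proof (rule suminf_le)
    fix k
    have "(\<integral>\<^sup>+\<omega>. ennreal ((6/5)^k) * Rn k hp (Xf U \<omega>) \<partial>M) = ennreal ((6/5)^k) * (\<integral>\<^sup>+\<omega>. Rn k hp (Xf U \<omega>) \<partial>M)"
      by (rule nn_integral_cmult) measurable
    also have "\<dots> \<le> ennreal ((6/5)^k) * ennreal ((2/3)^k * (Cb + 45))"
      by (intro mult_left_mono E_Rn fam_axioms) auto
    also have "\<dots> = ennreal ((Cb + 45) * (4/5)^k)"
    proof -
      have "ennreal ((6/5)^k) * ennreal ((2/3)^k * (Cb + 45)) = ennreal ((6/5)^k * ((2/3)^k * (Cb + 45)))"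
        by (rule ennreal_mult[symmetric]) (auto simp: Cb_def)
      moreover have "(6/5::real)^k * ((2/3)^k * (Cb + 45)) = (Cb + 45) * (4/5)^k"
        by (simp add: power_mult_distrib[symmetric])
      ultimately show ?thesis by simp
    qed
    finally show "(\<integral>\<^sup>+\<omega>. ennreal ((6/5)^k) * Rn k hp (Xf U \<omega>) \<partial>M) \<le> ennreal ((Cb + 45) * (4/5)^k)" .
  qed (rule summableI)+
  also have "\<dots> = ennreal (5 * (Cb + 45))" by (rule sum_geo5) (simp add: Cb_def)
  finally show ?thesis .
qed

lemma (in fam) AE_unit: "AE \<omega> in M. 0 < U w \<omega> \<and> U w \<omega> < 1"
proof -
  have "AE x in lborel. x \<in> {0..1::real} \<longrightarrow> 0 < x \<and> x < 1"
    using AE_lborel_singleton[of 0] AE_lborel_singleton[of 1]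
    by eventually_elim auto
  then have "AE x in mu. 0 < x \<and> x < 1"
    by (subst AE_uniform_measure) auto
  then have "AE x in distr M borel (U w). 0 < x \<and> x < 1" unfolding distr_U .
  then show ?thesis by (subst (asm) AE_distr_iff) auto
qed

lemma AE_fin:
  assumes "fam M U" "\<And>U. fam M U \<Longrightarrow> (\<integral>\<^sup>+\<omega>. f (Xf U \<omega>) \<partial>M) \<le> ennreal c"
    and [measurable]: "f \<in> borel_measurable PS"
  shows "AE \<omega> in M. f (Xf U \<omega>) < \<infinity>"
proof -
  interpret fam M U by fact
  have "(\<integral>\<^sup>+\<omega>. f (Xf U \<omega>) \<partial>M) \<noteq> \<infinity>"
    using assms(2)[OF assms(1)] by (auto simp: top_unique)
  then have "AE \<omega> in M. f (Xf U \<omega>) \<noteq> \<infinity>"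
    by (intro nn_integral_PInf_AE) auto
  then show ?thesis by (simp add: less_top)
qed

lemma AE_good: "fam M U \<Longrightarrow> AE \<omega> in M. good (Xf U \<omega>)"
proof -
  assume f: "fam M U"
  interpret fam M U by fact
  have "AE \<omega> in M. \<forall>w. 0 < U w \<omega> \<and> U w \<omega> < 1 \<and> Bn (sh w (Xf U \<omega>)) < \<infinity> \<and> Phi (sh w (Xf U \<omega>)) < \<infinity>"
  proof (subst AE_all_countable, intro allI)
    fix w
    have b: "AE \<omega> in M. Bn (sh w (Xf U \<omega>)) < \<infinity>"
      unfolding sh_Xf by (rule AE_fin[OF fam_shift E_Bn]) auto
    have c: "AE \<omega> in M. Phi (sh w (Xf U \<omega>)) < \<infinity>"
      unfolding sh_Xf by (rule AE_fin[OF fam_shift E_Phi]) auto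
    show "AE \<omega> in M. 0 < U w \<omega> \<and> U w \<omega> < 1 \<and> Bn (sh w (Xf U \<omega>)) < \<infinity> \<and> Phi (sh w (Xf U \<omega>)) < \<infinity>"
      using AE_unit[of w] b c by eventually_elim auto
  qed
  then show ?thesis by eventually_elim (auto simp: good_def Xf_def)
qed

theorem theorem1:
  fixes M :: "'a measure" and U :: "letter list \<Rightarrow> 'a \<Rightarrow> real"
  assumes "prob_space M"
    and "prob_space.indep_vars M (\<lambda>_. borel) U UNIV"
    and "\<And>v. U v \<in> borel_measurable M"
    and "\<And>v. distr M lborel (U v) = uniform_measure lborel {0..1}"
  shows "\<exists>Y :: letter list \<Rightarrow> 'a \<Rightarrow> real \<Rightarrow> real.
     (\<forall>v. Y v \<in> measurable M D_meas) \<and>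
     (\<forall>v w. distr M D_meas (Y v) = distr M D_meas (Y w)) \<and>
     (\<forall>v. AE \<omega> in M. \<forall>t\<in>{0..1}.
        Y v \<omega> t =
          (if t < U v \<omega> then U v \<omega> * Y (v @ [One]) \<omega> (t / U v \<omega>)
           else U v \<omega> * Y (v @ [One]) \<omega> 1
                + (1 - U v \<omega>) * Y (v @ [Two]) \<omega> ((t - U v \<omega>) / (1 - U v \<omega>)))
          + Ctx t (U v \<omega>))"
proof -
  interpret fam M U
    using assms by (intro fam.intro fam_axioms.intro) auto
  define Y where "Y v \<omega> = F (sh v (Xf U \<omega>))" for v \<omega>
  have mY: "Y v \<in> measurable M D_meas" for v
  proof -
    have "(\<lambda>\<omega>. sh v (Xf U \<omega>)) \<in> measurable M PS" by measurable
    then show ?thesis unfolding Y_def by (rule measurable_compose[OF _ measurable_F])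
  qed
  have dY: "distr M D_meas (Y v) = distr (Pi\<^sub>M UNIV (\<lambda>_. mu)) D_meas F" for v
  proof -
    have m: "(\<lambda>\<omega>. sh v (Xf U \<omega>)) \<in> measurable M PS" by measurable
    have Yv: "Y v = (\<lambda>\<omega>. F (sh v (Xf U \<omega>)))" by (simp add: Y_def fun_eq_iff)
    have "distr M D_meas (Y v) = distr (distr M PS (\<lambda>\<omega>. sh v (Xf U \<omega>))) D_meas F"
      by (subst distr_distr[OF measurable_F m]) (simp add: Yv comp_def)
    then show ?thesis by (simp add: law_shift)
  qed
  have eY: "AE \<omega> in M. \<forall>t\<in>{0..1}.
        Y v \<omega> t =
          (if t < U v \<omega> then U v \<omega> * Y (v @ [One]) \<omega> (t / U v \<omega>)
           else U v \<omega> * Y (v @ [One]) \<omega> 1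
                + (1 - U v \<omega>) * Y (v @ [Two]) \<omega> ((t - U v \<omega>) / (1 - U v \<omega>)))
          + Ctx t (U v \<omega>)" for v
  proof -
    have "AE \<omega> in M. good (sh v (Xf U \<omega>))"
      unfolding sh_Xf by (rule AE_good[OF fam_shift])
    then show ?thesis
    proof eventually_elim
      case (elim \<omega>)
      define x where "x = sh v (Xf U \<omega>)"
      have g: "good x" using elim by (simp add: x_def)
      have x0: "x [] = U v \<omega>" by (simp add: x_def sh_def Xf_def)
      have Y0: "Y v \<omega> = Yf x" using g by (simp add: Y_def F_def x_def)
      have Y1: "Y (v @ [a]) \<omega> = Yf (sh [a] x)" for a
        using good_sh[OF g, of "[a]"] by (simp add: Y_def F_def x_def)
      show ?case using Yf_eq[OF g] unfolding Y0 Y1 x0 by auto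
    qed
  qed
  show ?thesis
    by (rule exI[of _ Y]) (use mY dY eY in auto)
qed

end
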